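(* Let $m\ge1$. For $j=1,\ldots,m$ let $\rho_j,\bar\gamma_j\ge0$ with $\rho_j+\bar\gamma_j>0$, and let $\phi_{j,0}>0$ be constants. Let $(\eta_i)_{i\ge0}$ be integrable random variables with $\eta_{i+1}\ge\eta_i$ almost surely for all $i$, and $\eta_0\ge\underline\eta$ almost surely for some constant $\underline\eta>0$. Define recursively $$\phi_{j,i+1}:=\phi_{j,i}+2(\bar\gamma_j\eta_i+\rho_j)\qquad(j=1,\ldots,m;\ i\ge0).$$ Then: (a) If each $\eta_i$ is $\mathcal{O}_{i-1}$-measurable for a filtration $(\mathcal{O}_i)_{i\ge-1}$, then $\phi_{j,N}$ is $\mathcal{O}_{N-1}$-measurable and positive for every $N\ge1$. (b) For every $N\ge1$, $$\mathcal{E}[\phi_{j,N}]=\phi_{j,0}+2\rho_jN+2\bar\gamma_j\sum_{i=0}^{N-1}\mathcal{E}[\eta_i].$$ (c) There are constants $c_j>0$ such that $\mathcal{E}[\phi_{j,N}^{-1}]\le c_j/N$ for all $N\ge1$. (d) Suppose in addition that there are $p>0$ and $b>0$ such that $\eta_i\ge b\min_{k=1,\ldots,m}\phi_{k,i}^{\,p}$ almost surely for all $i\ge0$. Then there are constants $\tilde c_j>0$ such that $$\frac{1}{\mathcal{E}[\phi_{j,N}^{-1}]}\ \ge\ \bar\gamma_j\tilde c_jN^{p+1}\qquad(N\ge4).$$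
   Context: $\mathcal{E}$ denotes expectation on an underlying probability space. A filtration $(\mathcal{O}_i)_{i\ge-1}$ is an increasing sequence of $\sigma$-algebras. *)

theory Defs
  imports "HOL-Probability.Probability"
begin

primrec phiseq :: "(nat \<Rightarrow> real) \<Rightarrow> (nat \<Rightarrow> real) \<Rightarrow> (nat \<Rightarrow> real)
    \<Rightarrow> (nat \<Rightarrow> 'a \<Rightarrow> real) \<Rightarrow> nat \<Rightarrow> nat \<Rightarrow> 'a \<Rightarrow> real" where
  "phiseq phi0 \<rho> \<gamma> \<eta> j 0 = (\<lambda>x. phi0 j)"
| "phiseq phi0 \<rho> \<gamma> \<eta> j (Suc i) =
     (\<lambda>x. phiseq phi0 \<rho> \<gamma> \<eta> j i x + 2 * (\<gamma> j * \<eta> i x + \<rho> j))"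

end

theory Submission
  imports Defs "HOL-Probability.Conditional_Expectation"
begin

lemma phiseq_closed:
  "phiseq phi0 \<rho> \<gamma> \<eta> j N x = phi0 j + 2 * \<rho> j * real N + 2 * \<gamma> j * (\<Sum>i<N. \<eta> i x)"
  by (induction N) (simp_all add: algebra_simps)

lemma phiseq_closed_fun:
  "phiseq phi0 \<rho> \<gamma> \<eta> j N = (\<lambda>x. phi0 j + 2 * \<rho> j * real N + 2 * \<gamma> j * (\<Sum>i<N. \<eta> i x))"
  by (rule ext) (rule phiseq_closed)

lemma sum_powr_lower:
  fixes p :: real
  assumes "p > 0"
  shows "(\<Sum>i<N. (real i + 1) powr p) \<ge> (real N / 2) powr (p + 1)"
proof -
  have "(\<Sum>i\<in>{N div 2..<N}. (real i + 1) powr p) \<le> (\<Sum>i<N. (real i + 1) powr p)"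
    by (intro sum_mono2) auto
  moreover have "real (card {N div 2..<N}) * (real N / 2) powr p \<le> (\<Sum>i\<in>{N div 2..<N}. (real i + 1) powr p)"
  proof (rule sum_bounded_below)
    fix i assume "i \<in> {N div 2..<N}"
    then have "real N / 2 \<le> real i + 1" by auto
    then show "(real N / 2) powr p \<le> (real i + 1) powr p"
      using assms by (intro powr_mono2) auto
  qed
  moreover have "real N / 2 \<le> real (card {N div 2..<N})" by auto
  then have "(real N / 2) * (real N / 2) powr p \<le> real (card {N div 2..<N}) * (real N / 2) powr p"
    by (intro mult_right_mono) auto
  moreover have "(real N / 2) powr (p + 1) = (real N / 2) * (real N / 2) powr p"
    by (simp add: powr_add)
  ultimately show ?thesis by linarith
qed


theorem mainTheorem4:
  fixes M :: "'a measure" and m :: nat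
    and \<rho> \<gamma> phi0 :: "nat \<Rightarrow> real"
    and \<eta> :: "nat \<Rightarrow> 'a \<Rightarrow> real" and \<eta>low :: real
  defines "\<phi> \<equiv> phiseq phi0 \<rho> \<gamma> \<eta>"
  assumes M: "prob_space M"
    and m: "m \<ge> 1"
    and rho_nn: "\<And>j. j \<in> {1..m} \<Longrightarrow> \<rho> j \<ge> 0"
    and gamma_nn: "\<And>j. j \<in> {1..m} \<Longrightarrow> \<gamma> j \<ge> 0"
    and rho_gamma_pos: "\<And>j. j \<in> {1..m} \<Longrightarrow> \<rho> j + \<gamma> j > 0"
    and phi0_pos: "\<And>j. j \<in> {1..m} \<Longrightarrow> phi0 j > 0"
    and eta_int: "\<And>i. integrable M (\<eta> i)"
    and eta_mono: "\<And>i. AE x in M. \<eta> (Suc i) x \<ge> \<eta> i x"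
    and eta_low_pos: "\<eta>low > 0"
    and eta0_low: "AE x in M. \<eta> 0 x \<ge> \<eta>low"
  shows
    \<comment> \<open>(a): the filtration (O_i)_{i>=-1} is represented by F with F i = O_{i-1}\<close>
    "(\<forall>F :: nat \<Rightarrow> 'a measure.
        filtration (space M) F \<longrightarrow> (\<forall>i. subalgebra M (F i)) \<longrightarrow>
        (\<forall>i. \<eta> i \<in> borel_measurable (F i)) \<longrightarrow>
        (\<forall>j\<in>{1..m}. \<forall>N\<ge>1. \<phi> j N \<in> borel_measurable (F N)
                              \<and> (AE x in M. \<phi> j N x > 0)))
     \<and> \<comment> \<open>(b)\<close>
     (\<forall>j\<in>{1..m}. \<forall>N\<ge>1.
        prob_space.expectation M (\<phi> j N) =
          phi0 j + 2 * \<rho> j * real N + 2 * \<gamma> j * (\<Sum>i<N. prob_space.expectation M (\<eta> i)))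
     \<and> \<comment> \<open>(c)\<close>
     (\<forall>j\<in>{1..m}. \<exists>c>0. \<forall>N\<ge>1.
        prob_space.expectation M (\<lambda>x. inverse (\<phi> j N x)) \<le> c / real N)
     \<and> \<comment> \<open>(d)\<close>
     (\<forall>p b. p > 0 \<longrightarrow> b > 0 \<longrightarrow>
        (\<forall>i. AE x in M. \<eta> i x \<ge> b * Min ((\<lambda>k. \<phi> k i x powr p) ` {1..m})) \<longrightarrow>
        (\<forall>j\<in>{1..m}. \<exists>ct>0. \<forall>N\<ge>4.
           1 / prob_space.expectation M (\<lambda>x. inverse (\<phi> j N x))
             \<ge> \<gamma> j * ct * real N powr (p + 1)))"
proof -
  interpret prob_space M by (rule M)
  define a where "a k = \<gamma> k * \<eta>low + \<rho> k" for k
  have apos: "a k > 0" if "k \<in> {1..m}" for k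
  proof (cases "\<gamma> k > 0")
    case True then show ?thesis using rho_nn[OF that] eta_low_pos unfolding a_def
      by (simp add: add_pos_nonneg)
  next
    case False then have "\<gamma> k = 0" using gamma_nn[OF that] by auto
    then show ?thesis using rho_gamma_pos[OF that] unfolding a_def by simp
  qed
  have cl: "\<phi> k N x = phi0 k + 2 * \<rho> k * real N + 2 * \<gamma> k * (\<Sum>i<N. \<eta> i x)" for k N x
    unfolding \<phi>_def by (rule phiseq_closed)
  have clf: "\<phi> k N = (\<lambda>x. phi0 k + 2 * \<rho> k * real N + 2 * \<gamma> k * (\<Sum>i<N. \<eta> i x))" for k N
    unfolding \<phi>_def by (rule phiseq_closed_fun)
  have AE1: "AE x in M. (\<forall>i. \<eta> (Suc i) x \<ge> \<eta> i x) \<and> \<eta> 0 x \<ge> \<eta>low"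
    using eta0_low eta_mono by (auto simp: AE_all_countable)
  have AElow: "AE x in M. \<forall>i. \<eta> i x \<ge> \<eta>low"
    using AE1
  proof (rule AE_mp, intro AE_I2 impI allI)
    fix x i assume h: "(\<forall>i. \<eta> (Suc i) x \<ge> \<eta> i x) \<and> \<eta> 0 x \<ge> \<eta>low"
    show "\<eta> i x \<ge> \<eta>low"
      proof (induction i)
      case (Suc i) then show ?case using h by (meson order_trans)
    qed (use h in auto)
  qed
  have lin: "\<phi> k N x \<ge> phi0 k + 2 * real N * a k"
    if x: "\<forall>i. \<eta> i x \<ge> \<eta>low" and k: "k \<in> {1..m}" for k N x
  proof -
    have "real N * \<eta>low \<le> (\<Sum>i<N. \<eta> i x)"
      using sum_bounded_below[of "{..<N}" "\<eta>low" "\<lambda>i. \<eta> i x"] x by auto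
    then have "\<gamma> k * (real N * \<eta>low) \<le> \<gamma> k * (\<Sum>i<N. \<eta> i x)"
      using gamma_nn[OF k] by (intro mult_left_mono) auto
    then show ?thesis unfolding cl a_def by (simp add: algebra_simps)
  qed
  have AElin: "AE x in M. \<forall>k\<in>{1..m}. \<forall>N. \<phi> k N x \<ge> phi0 k + 2 * real N * a k"
    using AElow by (rule AE_mp) (auto intro!: AE_I2 lin)
  have meas: "\<phi> k N \<in> borel_measurable M" for k N
    unfolding clf using eta_int by (auto intro!: borel_measurable_integrable)
  have intg: "integrable M (\<phi> k N)" for k N
    unfolding clf using eta_int by auto
  have invint: "integrable M (\<lambda>x. inverse (\<phi> k N x))" if k: "k \<in> {1..m}" for k N
  proof (rule integrable_const_bound[where B="inverse (phi0 k)"])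
    show "AE x in M. norm (inverse (\<phi> k N x)) \<le> inverse (phi0 k)"
      using AElin
    proof (rule AE_mp, intro AE_I2 impI)
      fix x assume "\<forall>k\<in>{1..m}. \<forall>N. \<phi> k N x \<ge> phi0 k + 2 * real N * a k"
      then have "\<phi> k N x \<ge> phi0 k" using apos[OF k] k
        by (smt (verit) mult_nonneg_nonneg of_nat_0_le_iff)
      then show "norm (inverse (\<phi> k N x)) \<le> inverse (phi0 k)"
        using phi0_pos[OF k] by (simp add: le_imp_inverse_le)
    qed
    show "(\<lambda>x. inverse (\<phi> k N x)) \<in> borel_measurable M" using meas by measurable
  qed
  have Epos: "integral\<^sup>L M (\<lambda>x. inverse (\<phi> k N x)) > 0" if k: "k \<in> {1..m}" for k N
  proof -
    have pos: "AE x in M. inverse (\<phi> k N x) > 0"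
      using AElin
    proof (rule AE_mp, intro AE_I2 impI)
      fix x assume "\<forall>k\<in>{1..m}. \<forall>N. \<phi> k N x \<ge> phi0 k + 2 * real N * a k"
      then have "\<phi> k N x \<ge> phi0 k" using apos[OF k] k
        by (smt (verit) mult_nonneg_nonneg of_nat_0_le_iff)
      then show "inverse (\<phi> k N x) > 0" using phi0_pos[OF k] by simp
    qed
    have ge: "integral\<^sup>L M (\<lambda>x. inverse (\<phi> k N x)) \<ge> 0"
      using pos by (intro integral_nonneg_AE) (auto elim: AE_mp)
    have "integral\<^sup>L M (\<lambda>x. inverse (\<phi> k N x)) \<noteq> 0"
    proof
      assume "integral\<^sup>L M (\<lambda>x. inverse (\<phi> k N x)) = 0"
      then have "AE x in M. inverse (\<phi> k N x) = 0"
      proof -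
        have nn: "AE x in M. 0 \<le> inverse (\<phi> k N x)" using pos by eventually_elim auto
        show ?thesis using integral_nonneg_eq_0_iff_AE[OF invint[OF k] nn] \<open>integral\<^sup>L M (\<lambda>x. inverse (\<phi> k N x)) = 0\<close>
          by simp
      qed
      with pos have "AE x in M. False" by eventually_elim auto
      then show False by (simp add: AE_False)
    qed
    with ge show ?thesis by simp
  qed
  have partA: "(\<forall>F :: nat \<Rightarrow> 'a measure.
        filtration (space M) F \<longrightarrow> (\<forall>i. subalgebra M (F i)) \<longrightarrow>
        (\<forall>i. \<eta> i \<in> borel_measurable (F i)) \<longrightarrow>
        (\<forall>j\<in>{1..m}. \<forall>N\<ge>1. \<phi> j N \<in> borel_measurable (F N)
                              \<and> (AE x in M. \<phi> j N x > 0)))"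
  proof (intro allI impI ballI conjI)
    fix F :: "nat \<Rightarrow> 'a measure" and j N
    assume F: "filtration (space M) F" and em: "\<forall>i. \<eta> i \<in> borel_measurable (F i)"
      and j: "j \<in> {1..m}"
    have "\<eta> i \<in> borel_measurable (F N)" if "i < N" for i
    proof (rule measurable_from_subalg[OF _ spec[OF em, of i]])
      show "subalgebra (F N) (F i)" unfolding subalgebra_def
        using filtration.space_F[OF F] filtration.sets_F_mono[OF F, of i N] that by auto
    qed
    then show "\<phi> j N \<in> borel_measurable (F N)" unfolding clf by auto
    show "AE x in M. \<phi> j N x > 0"
      using AElin
    proof (rule AE_mp, intro AE_I2 impI)
      fix x assume "\<forall>k\<in>{1..m}. \<forall>N. \<phi> k N x \<ge> phi0 k + 2 * real N * a k"
      then have "\<phi> j N x \<ge> phi0 j" using apos[OF j] j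
        by (smt (verit) mult_nonneg_nonneg of_nat_0_le_iff)
      then show "\<phi> j N x > 0" using phi0_pos[OF j] by simp
    qed
  qed
  have partB: "(\<forall>j\<in>{1..m}. \<forall>N\<ge>1.
        prob_space.expectation M (\<phi> j N) =
          phi0 j + 2 * \<rho> j * real N + 2 * \<gamma> j * (\<Sum>i<N. prob_space.expectation M (\<eta> i)))"
    unfolding clf using eta_int by (simp add: prob_space)
  have partC: "(\<forall>j\<in>{1..m}. \<exists>c>0. \<forall>N\<ge>1.
        prob_space.expectation M (\<lambda>x. inverse (\<phi> j N x)) \<le> c / real N)"
  proof
    fix j assume j: "j \<in> {1..m}"
    show "\<exists>c>0. \<forall>N\<ge>1. prob_space.expectation M (\<lambda>x. inverse (\<phi> j N x)) \<le> c / real N"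
    proof (intro exI[of _ "1 / (2 * a j)"] conjI allI impI)
      show "1 / (2 * a j) > 0" using apos[OF j] by simp
      fix N :: nat assume N: "N \<ge> 1"
      have "integral\<^sup>L M (\<lambda>x. inverse (\<phi> j N x)) \<le> integral\<^sup>L M (\<lambda>x. 1 / (2 * a j) / real N)"
      proof (rule integral_mono_AE[OF invint[OF j]])
        show "AE x in M. inverse (\<phi> j N x) \<le> 1 / (2 * a j) / real N"
          using AElin
        proof (rule AE_mp, intro AE_I2 impI)
          fix x assume "\<forall>k\<in>{1..m}. \<forall>N. \<phi> k N x \<ge> phi0 k + 2 * real N * a k"
          then have "\<phi> j N x \<ge> phi0 j + 2 * real N * a j" using j by blast
          then have h: "\<phi> j N x \<ge> 2 * real N * a j" using phi0_pos[OF j] by linarith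
          have p: "2 * real N * a j > 0" using N apos[OF j] by simp
          have "inverse (\<phi> j N x) \<le> inverse (2 * real N * a j)"
            using h p by (rule le_imp_inverse_le)
          then show "inverse (\<phi> j N x) \<le> 1 / (2 * a j) / real N"
            by (simp add: field_simps)
        qed
      qed simp
      then show "prob_space.expectation M (\<lambda>x. inverse (\<phi> j N x)) \<le> 1 / (2 * a j) / real N"
        by (simp add: prob_space)
    qed
  qed
  have partD: "(\<forall>p b. p > 0 \<longrightarrow> b > 0 \<longrightarrow>
        (\<forall>i. AE x in M. \<eta> i x \<ge> b * Min ((\<lambda>k. \<phi> k i x powr p) ` {1..m})) \<longrightarrow>
        (\<forall>j\<in>{1..m}. \<exists>ct>0. \<forall>N\<ge>4.
           1 / prob_space.expectation M (\<lambda>x. inverse (\<phi> j N x))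
             \<ge> \<gamma> j * ct * real N powr (p + 1)))"
  proof (intro allI impI ballI)
    fix p b :: real and j
    assume p: "p > 0" and b: "b > 0"
      and hyp: "\<forall>i. AE x in M. \<eta> i x \<ge> b * Min ((\<lambda>k. \<phi> k i x powr p) ` {1..m})"
      and j: "j \<in> {1..m}"
    define c where "c = Min ((\<lambda>k. min (phi0 k) (2 * a k)) ` {1..m})"
    have cpos: "c > 0" unfolding c_def using m apos phi0_pos by (subst Min_gr_iff) auto
    have cle: "c \<le> phi0 k" "c \<le> 2 * a k" if "k \<in> {1..m}" for k
    proof -
      have "c \<le> min (phi0 k) (2 * a k)" unfolding c_def using that by (intro Min_le) auto
      then show "c \<le> phi0 k" "c \<le> 2 * a k" by auto
    qed
    define ct where "ct = b * c powr p / 2 powr p"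
    have ctpos: "ct > 0" unfolding ct_def using b cpos by simp
    show "\<exists>ct>0. \<forall>N\<ge>4. 1 / prob_space.expectation M (\<lambda>x. inverse (\<phi> j N x))
             \<ge> \<gamma> j * ct * real N powr (p + 1)"
    proof (intro exI[of _ ct] conjI allI impI)
      show "ct > 0" by (rule ctpos)
      fix N :: nat assume N: "N \<ge> 4"
      have E: "integral\<^sup>L M (\<lambda>x. inverse (\<phi> j N x)) > 0" by (rule Epos[OF j])
      show "1 / prob_space.expectation M (\<lambda>x. inverse (\<phi> j N x)) \<ge> \<gamma> j * ct * real N powr (p + 1)"
      proof (cases "\<gamma> j > 0")
        case False
        then have "\<gamma> j = 0" using gamma_nn[OF j] by auto
        then show ?thesis using E by simp
      next
        case gpos: True
        define K where "K = \<gamma> j * ct * real N powr (p + 1)"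
        have Kpos: "K > 0" unfolding K_def using gpos ctpos N by simp
        have "integral\<^sup>L M (\<lambda>x. inverse (\<phi> j N x)) \<le> integral\<^sup>L M (\<lambda>x. inverse K)"
        proof (rule integral_mono_AE[OF invint[OF j]])
          have "AE x in M. \<forall>i. \<eta> i x \<ge> b * Min ((\<lambda>k. \<phi> k i x powr p) ` {1..m})"
            using hyp by (simp add: AE_all_countable)
          then show "AE x in M. inverse (\<phi> j N x) \<le> inverse K"
            using AElin
          proof (rule AE_mp[OF AE_conjI], intro AE_I2 impI)
            fix x assume hx: "(\<forall>i. \<eta> i x \<ge> b * Min ((\<lambda>k. \<phi> k i x powr p) ` {1..m})) \<and>
               (\<forall>k\<in>{1..m}. \<forall>N. \<phi> k N x \<ge> phi0 k + 2 * real N * a k)"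
            have etai: "\<eta> i x \<ge> b * (c powr p * (real i + 1) powr p)" for i
            proof -
              have "c * (real i + 1) \<le> \<phi> k i x" if k: "k \<in> {1..m}" for k
              proof -
                have "c * (real i + 1) = c + real i * c" by (simp add: algebra_simps)
                also have "\<dots> \<le> phi0 k + real i * (2 * a k)"
                  using cle[OF k] by (intro add_mono mult_left_mono) auto
                also have "\<dots> \<le> \<phi> k i x" using hx k by (simp add: algebra_simps)
                finally show ?thesis .
              qed
              then have "(c * (real i + 1)) powr p \<le> \<phi> k i x powr p" if "k \<in> {1..m}" for k
                using that cpos p by (intro powr_mono2) auto
              then have "(c * (real i + 1)) powr p \<le> Min ((\<lambda>k. \<phi> k i x powr p) ` {1..m})"
                using m by (subst Min_ge_iff) auto
              then have "b * (c * (real i + 1)) powr p \<le> b * Min ((\<lambda>k. \<phi> k i x powr p) ` {1..m})"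
                using b by simp
              then have "b * (c powr p * (real i + 1) powr p) \<le> b * Min ((\<lambda>k. \<phi> k i x powr p) ` {1..m})"
                using cpos by (simp add: powr_mult)
              then show ?thesis using hx by (meson order_trans)
            qed
            have "b * c powr p * (real N / 2) powr (p + 1) \<le> b * c powr p * (\<Sum>i<N. (real i + 1) powr p)"
              using sum_powr_lower[OF p, of N] b cpos by (intro mult_left_mono) auto
            also have "\<dots> = (\<Sum>i<N. b * (c powr p * (real i + 1) powr p))"
              by (simp add: sum_distrib_left mult.assoc)
            also have "\<dots> \<le> (\<Sum>i<N. \<eta> i x)" by (intro sum_mono etai)
            finally have s: "b * c powr p * (real N / 2) powr (p + 1) \<le> (\<Sum>i<N. \<eta> i x)" .
            have "(real N / 2) powr (p + 1) = real N powr (p + 1) / 2 powr (p + 1)"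
              by (simp add: powr_divide)
            also have "\<dots> = real N powr (p + 1) / (2 * 2 powr p)"
              by (simp add: powr_add)
            finally have eq: "b * c powr p * (real N / 2) powr (p + 1) = ct * real N powr (p + 1) / 2"
              unfolding ct_def by (simp add: field_simps)
            have "K \<le> 2 * \<gamma> j * (\<Sum>i<N. \<eta> i x)"
              using s gpos unfolding eq K_def by (simp add: field_simps)
            also have "\<dots> \<le> \<phi> j N x"
              unfolding cl using phi0_pos[OF j] rho_nn[OF j] by simp
            finally have "K \<le> \<phi> j N x" .
            then show "inverse (\<phi> j N x) \<le> inverse K"
              using Kpos by (rule le_imp_inverse_le)
          qed
        qed simp
        then have "integral\<^sup>L M (\<lambda>x. inverse (\<phi> j N x)) \<le> inverse K" by (simp add: prob_space)
        then have "K \<le> inverse (integral\<^sup>L M (\<lambda>x. inverse (\<phi> j N x)))"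
          using E Kpos by (metis inverse_inverse_eq le_imp_inverse_le)
        then show ?thesis unfolding K_def by (simp add: divide_inverse)
      qed
    qed
  qed
  show ?thesis using partA partB partC partD by blast
qed

end
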